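(* Let $d\geq1$, $C=\mathbb R_{\geq0}^d$, and order $\mathbb R^d$ componentwise ($x\leq y$ iff $y-x\in C$). For $i=1,\ldots,d$ let $\alpha_i\geq0$, $c_i\geq0$, $\beta^i\in\mathbb R^d$, and $\mu_i$ a Borel measure on $C\setminus\{0\}$ such that $\mu_i(\{\xi\in C:|\xi|>1\})<\infty$, $\int_{\xi\in C,\,0<|\xi|\leq1}\big(\sum_{k\neq i}|\xi_k|+|\xi_i|^2\big)\mu_i(d\xi)<\infty$, and $\beta^i_k-\int_{0<|\xi|\leq1}\xi_k\,\mu_i(d\xi)\geq0$ for all $k\neq i$. Define $f=(f_1,\ldots,f_d)$ with values in $(-\infty,+\infty]$ by $$f_i(x)=\frac{\alpha_i}{2}x_i^2+x\cdot\beta^i-c_i+\int_{C\setminus\{0\}}\left(e^{x\cdot\xi}-1-x\cdot\xi\,\mathbf 1_{|\xi|\leq1}\right)\mu_i(d\xi),\qquad x\in\mathbb R^d,$$ and let $U=\{x\in\mathbb R^d: f_i(x)<\infty\text{ for all }i\}$. Then $U$ is convex and order-regular, and $f$ is convex and quasi-monotone increasing on $U$.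
   Context: A map $g\colon D\to\mathbb R^d$ is convex if $D$ is convex and $g(\lambda x+(1-\lambda)y)\leq\lambda g(x)+(1-\lambda)g(y)$ componentwise for $x,y\in D$, $\lambda\in[0,1]$. For the order induced by $\mathbb R^d_{\geq0}$, $g$ is quasi-monotone increasing on $D$ if for all $x,y\in D$ with $x\leq y$ and $x_i=y_i$ one has $g_i(x)\leq g_i(y)$ (equivalently: $x\leq y$, $l(x)=l(y)$ imply $l(g(x))\leq l(g(y))$ for every linear functional $l$ nonnegative on $\mathbb R^d_{\geq0}$). A set $D$ is order-regular if $x\in D$, $y\leq x$ imply $y\in D$. Here $|\cdot|$ is the Euclidean norm and $x\cdot\xi$ the standard inner product. *)

theory Defs
  imports "HOL-Analysis.Analysis"
begin

definition orthant :: "(real^'n) set" where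
  "orthant = {\<xi>. \<forall>k. 0 \<le> \<xi> $ k}"

text \<open>Extended-real valued integral: integral of the positive part minus
  integral of the negative part (values in (-infinity, +infinity] whenever the
  negative part has finite integral).\<close>
definition ext_integral :: "'a measure \<Rightarrow> ('a \<Rightarrow> real) \<Rightarrow> ereal" where
  "ext_integral M g =
     enn2ereal (\<integral>\<^sup>+ \<xi>. ennreal (g \<xi>) \<partial>M) - enn2ereal (\<integral>\<^sup>+ \<xi>. ennreal (- g \<xi>) \<partial>M)"

definition levy_f ::
  "('n \<Rightarrow> real) \<Rightarrow> ('n \<Rightarrow> real^'n) \<Rightarrow> ('n \<Rightarrow> real) \<Rightarrow> ('n \<Rightarrow> (real^'n) measure)
     \<Rightarrow> 'n \<Rightarrow> real^'n \<Rightarrow> ereal" where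
  "levy_f \<alpha> \<beta> c \<mu> i x =
     ereal (\<alpha> i / 2 * (x $ i)\<^sup>2 + x \<bullet> \<beta> i - c i)
     + ext_integral (restrict_space (\<mu> i) (orthant - {0}))
         (\<lambda>\<xi>. exp (x \<bullet> \<xi>) - 1 - (if norm \<xi> \<le> 1 then x \<bullet> \<xi> else 0))"

end

theory Submission
  imports Defs
begin

definition gg :: "real^'n::finite \<Rightarrow> real^'n \<Rightarrow> real" where
  "gg x \<xi> = exp (x \<bullet> \<xi>) - 1 - (if norm \<xi> \<le> 1 then x \<bullet> \<xi> else 0)"

lemma orthant_borel: "orthant \<in> sets borel"
  unfolding orthant_def by (simp add: borel_closed closed_Collect_all closed_Collect_le)

lemma gg_meas:
  assumes "sets M = sets borel"
  shows "gg x \<in> borel_measurable (restrict_space M (orthant - {0}))"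
proof -
  have "gg x \<in> borel_measurable borel" unfolding gg_def[abs_def] by measurable
  then have "gg x \<in> borel_measurable M" using measurable_cong_sets[OF assms refl] by blast
  then show ?thesis by (rule measurable_restrict_space1)
qed

lemma levy_alt: "levy_f \<alpha> \<beta> c \<mu> i x = ereal (\<alpha> i / 2 * (x $ i)\<^sup>2 + x \<bullet> \<beta> i - c i)
     + ext_integral (restrict_space (\<mu> i) (orthant - {0})) (gg x)"
  by (simp add: levy_f_def gg_def[abs_def])

lemma exp_taylor2: "exp (t::real) - 1 - t \<le> exp \<bar>t\<bar> / 2 * t\<^sup>2"
proof -
  obtain s where s: "\<bar>s\<bar> \<le> \<bar>t\<bar>" "exp t = (\<Sum>m<2. (t ^ m) / fact m) + (exp s / fact 2) * t ^ 2"
    using Maclaurin_exp_le[of t 2] by blast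
  have "exp s \<le> exp \<bar>t\<bar>" using s(1) by simp
  then have "exp s / 2 * t\<^sup>2 \<le> exp \<bar>t\<bar> / 2 * t\<^sup>2" by (intro mult_right_mono) auto
  with s(2) show ?thesis by (simp add: numeral_2_eq_2)
qed

definition qq :: "'n::finite \<Rightarrow> real^'n \<Rightarrow> real" where
  "qq i \<xi> = (\<Sum>k\<in>UNIV - {i}. \<bar>\<xi> $ k\<bar>) + (\<xi> $ i)\<^sup>2"

lemma norm_sq_le_qq:
  assumes "norm \<xi> \<le> 1" shows "(norm \<xi>)\<^sup>2 \<le> qq i \<xi>"
proof -
  have c: "\<bar>\<xi> $ k\<bar> \<le> 1" for k using component_le_norm_cart[of \<xi> k] assms by linarith
  have "(norm \<xi>)\<^sup>2 = (\<Sum>k\<in>UNIV. (\<xi> $ k)\<^sup>2)"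
    by (simp add: norm_vec_def L2_set_def sum_nonneg)
  also have "\<dots> = (\<Sum>k\<in>UNIV - {i}. (\<xi> $ k)\<^sup>2) + (\<xi> $ i)\<^sup>2"
    by (simp add: sum.remove[of UNIV i] add.commute)
  also have "(\<Sum>k\<in>UNIV - {i}. (\<xi> $ k)\<^sup>2) \<le> (\<Sum>k\<in>UNIV - {i}. \<bar>\<xi> $ k\<bar>)"
  proof (rule sum_mono)
    fix k have "\<bar>\<xi> $ k\<bar> * \<bar>\<xi> $ k\<bar> \<le> 1 * \<bar>\<xi> $ k\<bar>" using c[of k] by (intro mult_right_mono) auto
    then show "(\<xi> $ k)\<^sup>2 \<le> \<bar>\<xi> $ k\<bar>" by (simp add: power2_eq_square abs_mult_self_eq)
  qed
  finally show ?thesis by (simp add: qq_def)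
qed

lemma qq_nonneg: "0 \<le> qq i \<xi>" unfolding qq_def by (intro add_nonneg_nonneg sum_nonneg) auto

lemma gg_small:
  assumes "norm \<xi> \<le> 1" shows "gg y \<xi> \<le> exp (norm y) / 2 * (norm y)\<^sup>2 * qq i \<xi>"
proof -
  let ?t = "y \<bullet> \<xi>"
  have t: "\<bar>?t\<bar> \<le> norm y" using Cauchy_Schwarz_ineq2[of y \<xi>] assms
    by (meson dual_order.trans mult_left_le norm_ge_zero)
  have t2: "?t\<^sup>2 \<le> (norm y)\<^sup>2 * (norm \<xi>)\<^sup>2"
    using Cauchy_Schwarz_ineq2[of y \<xi>]
    by (metis abs_ge_zero power2_abs power_mono power_mult_distrib)
  have "gg y \<xi> = exp ?t - 1 - ?t" using assms by (simp add: gg_def)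
  also have "\<dots> \<le> exp \<bar>?t\<bar> / 2 * ?t\<^sup>2" by (rule exp_taylor2)
  also have "\<dots> \<le> exp (norm y) / 2 * ((norm y)\<^sup>2 * (norm \<xi>)\<^sup>2)"
    using t t2 by (intro mult_mono) auto
  also have "\<dots> \<le> exp (norm y) / 2 * ((norm y)\<^sup>2 * qq i \<xi>)"
    using norm_sq_le_qq[OF assms, of i] by (intro mult_left_mono) auto
  finally show ?thesis by simp
qed

lemma gg_nonneg_small: "norm \<xi> \<le> 1 \<Longrightarrow> 0 \<le> gg y \<xi>"
proof -
  have a: "1 + y \<bullet> \<xi> \<le> exp (y \<bullet> \<xi>)" by (rule exp_ge_add_one_self)
  assume "norm \<xi> \<le> 1"
  then have "gg y \<xi> = exp (y \<bullet> \<xi>) - 1 - y \<bullet> \<xi>" by (simp add: gg_def)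
  with a show "0 \<le> gg y \<xi>" by linarith
qed

lemma gg_lower: "norm \<xi> > 1 \<Longrightarrow> - 1 \<le> gg y \<xi>"
proof -
  have "0 < exp (y \<bullet> \<xi>)" by simp
  then show "norm \<xi> > 1 \<Longrightarrow> - 1 \<le> gg y \<xi>" by (simp add: gg_def)
qed

lemma inner_orthant_mono:
  assumes "\<xi> \<in> orthant" "\<forall>k. y $ k \<le> x $ k" shows "y \<bullet> \<xi> \<le> x \<bullet> \<xi>"
  using assms unfolding orthant_def inner_vec_def
  by (auto intro!: sum_mono mult_right_mono)

lemma gg_convex:
  assumes "0 \<le> t" "t \<le> 1"
  shows "gg (t *\<^sub>R x + (1 - t) *\<^sub>R y) \<xi> \<le> t * gg x \<xi> + (1 - t) * gg y \<xi>"
proof -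
  have e: "exp (t * (x \<bullet> \<xi>) + (1 - t) * (y \<bullet> \<xi>)) \<le> t * exp (x \<bullet> \<xi>) + (1 - t) * exp (y \<bullet> \<xi>)"
    using convex_onD[OF exp_convex, of "t" "y \<bullet> \<xi>" "x \<bullet> \<xi>"] assms by (simp add: algebra_simps)
  then show ?thesis using assms by (simp add: gg_def inner_add_left algebra_simps)
qed


lemma qq_meas[measurable]: "qq i \<in> borel_measurable borel"
  unfolding qq_def by measurable

lemma S_sets: "sets M = sets borel \<Longrightarrow> (orthant - {0}) \<inter> space M \<in> sets M"
  using sets.Diff[OF orthant_borel borel_closed[OF closed_singleton[of 0]]]
  by (simp add: sets_eq_imp_space_eq[of M borel])

lemma nnN: "sets M = sets borel \<Longrightarrow>
   (\<integral>\<^sup>+\<xi>. f \<xi> \<partial>restrict_space M (orthant - {0})) = (\<integral>\<^sup>+\<xi>. f \<xi> * indicator (orthant - {0}) \<xi> \<partial>M)"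
  by (rule nn_integral_restrict_space[OF S_sets])

lemma spaceN: "sets M = sets borel \<Longrightarrow> space (restrict_space M (orthant - {0})) = orthant - {0}"
  by (simp add: space_restrict_space sets_eq_imp_space_eq[of M borel])

lemma neg_fin:
  assumes M: "sets M = sets borel" and L: "emeasure M {\<xi> \<in> orthant. norm \<xi> > 1} < \<infinity>"
  shows "(\<integral>\<^sup>+\<xi>. ennreal (- gg x \<xi>) \<partial>restrict_space M (orthant - {0})) < \<infinity>"
proof -
  have Lb: "{\<xi> \<in> orthant. norm \<xi> > 1} \<in> sets M"
  proof -
    have "{\<xi> \<in> orthant. norm \<xi> > 1} = orthant \<inter> {\<xi>. 1 < norm \<xi>}" by auto
    also have "\<dots> \<in> sets borel" using orthant_borel
      by (intro sets.Int) (auto intro!: borel_open open_Collect_less continuous_intros)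
    finally show ?thesis using M by simp
  qed
  have "(\<integral>\<^sup>+\<xi>. ennreal (- gg x \<xi>) \<partial>restrict_space M (orthant - {0}))
      \<le> (\<integral>\<^sup>+\<xi>. indicator {\<xi>. 1 < norm \<xi>} \<xi> \<partial>restrict_space M (orthant - {0}))"
  proof (rule nn_integral_mono)
    fix \<xi> show "ennreal (- gg x \<xi>) \<le> indicator {\<xi>. 1 < norm \<xi>} \<xi>"
    proof (cases "norm \<xi> \<le> 1")
      case True then show ?thesis using gg_nonneg_small[OF True, of x] by (simp add: ennreal_neg)
    next
      case False then show ?thesis using gg_lower[of \<xi> x] by (simp add: indicator_def)
    qed
  qed
  also have "\<dots> = (\<integral>\<^sup>+\<xi>. indicator {\<xi> \<in> orthant. norm \<xi> > 1} \<xi> \<partial>M)"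
    by (simp add: nnN[OF M]) (intro nn_integral_cong, auto simp: indicator_def)
  also have "\<dots> = emeasure M {\<xi> \<in> orthant. norm \<xi> > 1}"
    using Lb by simp
  finally show ?thesis using L by simp
qed

lemma small_fin:
  assumes M: "sets M = sets borel"
    and sm: "(\<integral>\<^sup>+ \<xi> \<in> {\<xi> \<in> orthant. 0 < norm \<xi> \<and> norm \<xi> \<le> 1}.
                ennreal ((\<Sum>k\<in>UNIV - {i}. \<bar>\<xi> $ k\<bar>) + (\<xi> $ i)\<^sup>2) \<partial>M) < \<infinity>"
    and K: "0 \<le> K"
  shows "(\<integral>\<^sup>+\<xi>. ennreal (K * qq i \<xi> * indicator {\<xi>. norm \<xi> \<le> 1} \<xi>) \<partial>restrict_space M (orthant - {0})) < \<infinity>"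
proof -
  have "(\<integral>\<^sup>+\<xi>. ennreal (K * qq i \<xi> * indicator {\<xi>. norm \<xi> \<le> 1} \<xi>) \<partial>restrict_space M (orthant - {0}))
     = (\<integral>\<^sup>+\<xi>. ennreal K * (ennreal (qq i \<xi>) * indicator {\<xi> \<in> orthant. 0 < norm \<xi> \<and> norm \<xi> \<le> 1} \<xi>) \<partial>M)"
    by (simp add: nnN[OF M]) (intro nn_integral_cong, auto simp: indicator_def ennreal_mult K qq_nonneg)
  also have "\<dots> = ennreal K * (\<integral>\<^sup>+\<xi>. ennreal (qq i \<xi>) * indicator {\<xi> \<in> orthant. 0 < norm \<xi> \<and> norm \<xi> \<le> 1} \<xi> \<partial>M)"
  proof (rule nn_integral_cmult)
    have "{\<xi> \<in> orthant. 0 < norm \<xi> \<and> norm \<xi> \<le> 1} \<in> sets borel"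
    proof -
      have "{\<xi> \<in> orthant. 0 < norm \<xi> \<and> norm \<xi> \<le> 1} = orthant \<inter> ({\<xi>. 0 < norm \<xi>} \<inter> {\<xi>. norm \<xi> \<le> 1})" (is "_ = _ \<inter> (?A \<inter> ?B)") by auto
      also have "\<dots> \<in> sets borel"
      proof (rule sets.Int[OF orthant_borel sets.Int])
        show "?A \<in> sets borel"
          by (intro borel_open open_Collect_less continuous_intros)
        show "?B \<in> sets borel"
          by (intro borel_closed closed_Collect_le continuous_intros)
      qed
      finally show ?thesis .
    qed
    note [measurable] = this
    have "(\<lambda>\<xi>. ennreal (qq i \<xi>) * indicator {\<xi> \<in> orthant. 0 < norm \<xi> \<and> norm \<xi> \<le> 1} \<xi>) \<in> borel_measurable borel"
      by measurable
    then show "(\<lambda>\<xi>. ennreal (qq i \<xi>) * indicator {\<xi> \<in> orthant. 0 < norm \<xi> \<and> norm \<xi> \<le> 1} \<xi>) \<in> borel_measurable M"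
      using measurable_cong_sets[OF M refl] by blast
  qed
  also have "\<dots> < \<infinity>" using sm by (simp add: qq_def ennreal_mult_less_top)
  finally show ?thesis .
qed

lemma ennreal_max0: "ennreal (max a 0) = ennreal a"
  by (cases "a \<le> 0") (auto simp: ennreal_neg max_def)

lemma measN: "sets M = sets borel \<Longrightarrow> f \<in> borel_measurable borel \<Longrightarrow> f \<in> borel_measurable (restrict_space M (orthant - {0}))"
  by (rule measurable_restrict_space1) (use measurable_cong_sets[of M borel] in blast)

lemma small_meas: "(\<lambda>\<xi>. ennreal (K * qq i \<xi> * indicator {\<xi>. norm \<xi> \<le> 1} \<xi>)) \<in> borel_measurable borel"
proof -
  have [measurable]: "{\<xi>::real^'a. norm \<xi> \<le> 1} \<in> sets borel"
    by (intro borel_closed closed_Collect_le continuous_intros)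
  show ?thesis by measurable
qed

lemma gg_meas_borel: "gg x \<in> borel_measurable borel" unfolding gg_def[abs_def] by measurable

lemma pos_mono:
  assumes M: "sets M = sets borel"
    and sm: "(\<integral>\<^sup>+ \<xi> \<in> {\<xi> \<in> orthant. 0 < norm \<xi> \<and> norm \<xi> \<le> 1}.
                ennreal ((\<Sum>k\<in>UNIV - {i}. \<bar>\<xi> $ k\<bar>) + (\<xi> $ i)\<^sup>2) \<partial>M) < \<infinity>"
    and le: "\<forall>k. y $ k \<le> x $ k"
    and fx: "(\<integral>\<^sup>+\<xi>. ennreal (gg x \<xi>) \<partial>restrict_space M (orthant - {0})) < \<infinity>"
  shows "(\<integral>\<^sup>+\<xi>. ennreal (gg y \<xi>) \<partial>restrict_space M (orthant - {0})) < \<infinity>"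
proof -
  define K where "K = exp (norm y) / 2 * (norm y)\<^sup>2"
  have K: "0 \<le> K" unfolding K_def by simp
  let ?N = "restrict_space M (orthant - {0})"
  have m1: "(\<lambda>\<xi>. ennreal (gg x \<xi>)) \<in> borel_measurable ?N"
    using measN[OF M gg_meas_borel[of x]] by measurable
  have m2: "(\<lambda>\<xi>. ennreal (K * qq i \<xi> * indicator {\<xi>. norm \<xi> \<le> 1} \<xi>)) \<in> borel_measurable ?N"
    by (rule measN[OF M small_meas])
  have "(\<integral>\<^sup>+\<xi>. ennreal (gg y \<xi>) \<partial>?N) \<le>
     (\<integral>\<^sup>+\<xi>. ennreal (gg x \<xi>) + ennreal (K * qq i \<xi> * indicator {\<xi>. norm \<xi> \<le> 1} \<xi>) \<partial>?N)"
  proof (rule nn_integral_mono)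
    fix \<xi> assume "\<xi> \<in> space ?N"
    then have \<xi>: "\<xi> \<in> orthant" using spaceN[OF M] by auto
    show "ennreal (gg y \<xi>) \<le> ennreal (gg x \<xi>) + ennreal (K * qq i \<xi> * indicator {\<xi>. norm \<xi> \<le> 1} \<xi>)"
    proof (cases "norm \<xi> \<le> 1")
      case True
      then have "ennreal (gg y \<xi>) \<le> ennreal (K * qq i \<xi> * indicator {\<xi>. norm \<xi> \<le> 1} \<xi>)"
        using gg_small[OF True, of y i] by (intro ennreal_leI) (simp add: K_def)
      then show ?thesis by (simp add: add_increasing)
    next
      case False
      then have "gg y \<xi> \<le> gg x \<xi>" using inner_orthant_mono[OF \<xi> le] by (simp add: gg_def)
      then have "ennreal (gg y \<xi>) \<le> ennreal (gg x \<xi>)" by (rule ennreal_leI)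
      then show ?thesis by (simp add: add_increasing2)
    qed
  qed
  also have "\<dots> = (\<integral>\<^sup>+\<xi>. ennreal (gg x \<xi>) \<partial>?N) + (\<integral>\<^sup>+\<xi>. ennreal (K * qq i \<xi> * indicator {\<xi>. norm \<xi> \<le> 1} \<xi>) \<partial>?N)"
    by (rule nn_integral_add[OF m1 m2])
  also have "\<dots> < \<infinity>" using fx small_fin[OF M sm K] by (simp add: less_top)
  finally show ?thesis .
qed

lemma pos_convex:
  assumes M: "sets M = sets borel" and t: "0 \<le> t" "t \<le> 1"
    and fx: "(\<integral>\<^sup>+\<xi>. ennreal (gg x \<xi>) \<partial>restrict_space M (orthant - {0})) < \<infinity>"
    and fy: "(\<integral>\<^sup>+\<xi>. ennreal (gg y \<xi>) \<partial>restrict_space M (orthant - {0})) < \<infinity>"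
  shows "(\<integral>\<^sup>+\<xi>. ennreal (gg (t *\<^sub>R x + (1 - t) *\<^sub>R y) \<xi>) \<partial>restrict_space M (orthant - {0})) < \<infinity>"
proof -
  let ?N = "restrict_space M (orthant - {0})"
  have m1: "(\<lambda>\<xi>. ennreal (gg x \<xi>)) \<in> borel_measurable ?N"
    using measN[OF M gg_meas_borel[of x]] by measurable
  have m2: "(\<lambda>\<xi>. ennreal (gg y \<xi>)) \<in> borel_measurable ?N"
    using measN[OF M gg_meas_borel[of y]] by measurable
  have "(\<integral>\<^sup>+\<xi>. ennreal (gg (t *\<^sub>R x + (1 - t) *\<^sub>R y) \<xi>) \<partial>?N) \<le>
     (\<integral>\<^sup>+\<xi>. ennreal t * ennreal (gg x \<xi>) + ennreal (1 - t) * ennreal (gg y \<xi>) \<partial>?N)"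
  proof (rule nn_integral_mono)
    fix \<xi>
    have a: "gg (t *\<^sub>R x + (1 - t) *\<^sub>R y) \<xi> \<le> t * max (gg x \<xi>) 0 + (1 - t) * max (gg y \<xi>) 0"
      using gg_convex[OF t, of x y \<xi>] t
      by (smt (verit) max.cobounded1 mult_left_mono)
    have "ennreal (gg (t *\<^sub>R x + (1 - t) *\<^sub>R y) \<xi>) \<le> ennreal (t * max (gg x \<xi>) 0 + (1 - t) * max (gg y \<xi>) 0)"
      by (rule ennreal_leI[OF a])
    also have "\<dots> = ennreal t * ennreal (gg x \<xi>) + ennreal (1 - t) * ennreal (gg y \<xi>)"
      using t by (simp add: ennreal_plus ennreal_mult ennreal_max0)
    finally show "ennreal (gg (t *\<^sub>R x + (1 - t) *\<^sub>R y) \<xi>) \<le> ennreal t * ennreal (gg x \<xi>) + ennreal (1 - t) * ennreal (gg y \<xi>)" .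
  qed
  also have "\<dots> = ennreal t * (\<integral>\<^sup>+\<xi>. ennreal (gg x \<xi>) \<partial>?N) + ennreal (1 - t) * (\<integral>\<^sup>+\<xi>. ennreal (gg y \<xi>) \<partial>?N)"
    using m1 m2 by (simp add: nn_integral_add nn_integral_cmult)
  also have "\<dots> < \<infinity>" using fx fy by (simp add: ennreal_mult_less_top)
  finally show ?thesis .
qed

lemma levy_lt_top_iff:
  assumes M: "sets (\<mu> i) = sets borel" and L: "emeasure (\<mu> i) {\<xi> \<in> orthant. norm \<xi> > 1} < \<infinity>"
  shows "levy_f \<alpha> \<beta> c \<mu> i x < \<infinity> \<longleftrightarrow>
     (\<integral>\<^sup>+\<xi>. ennreal (gg x \<xi>) \<partial>restrict_space (\<mu> i) (orthant - {0})) < \<infinity>"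
proof -
  obtain q where q: "0 \<le> q" "(\<integral>\<^sup>+\<xi>. ennreal (- gg x \<xi>) \<partial>restrict_space (\<mu> i) (orthant - {0})) = ennreal q"
    using neg_fin[OF M L, of x] by (auto simp: less_top_ennreal)
  show ?thesis
  proof (cases "(\<integral>\<^sup>+\<xi>. ennreal (gg x \<xi>) \<partial>restrict_space (\<mu> i) (orthant - {0})) = \<infinity>")
    case True then show ?thesis using q by (simp add: levy_alt ext_integral_def)
  next
    case False
    then obtain p where p: "0 \<le> p" "(\<integral>\<^sup>+\<xi>. ennreal (gg x \<xi>) \<partial>restrict_space (\<mu> i) (orthant - {0})) = ennreal p"
      by (auto simp: less_top_ennreal top.not_eq_extremum)
    then show ?thesis using q by (simp add: levy_alt ext_integral_def)
  qed
qed

lemma integrable_iff: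
  assumes M: "sets M = sets borel" and L: "emeasure M {\<xi> \<in> orthant. norm \<xi> > 1} < \<infinity>"
  shows "integrable (restrict_space M (orthant - {0})) (gg x) \<longleftrightarrow>
     (\<integral>\<^sup>+\<xi>. ennreal (gg x \<xi>) \<partial>restrict_space M (orthant - {0})) < \<infinity>"
  using neg_fin[OF M L, of x] measN[OF M gg_meas_borel[of x]]
  by (simp add: real_integrable_def less_top)

lemma levy_val:
  assumes "integrable (restrict_space (\<mu> i) (orthant - {0})) (gg x)"
  shows "levy_f \<alpha> \<beta> c \<mu> i x = ereal (\<alpha> i / 2 * (x $ i)\<^sup>2 + x \<bullet> \<beta> i - c i
     + integral\<^sup>L (restrict_space (\<mu> i) (orthant - {0})) (gg x))"
proof -
  from integrableE[OF assms] obtain r q where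
    "0 \<le> r" "0 \<le> q"
    "(\<integral>\<^sup>+\<xi>. ennreal (gg x \<xi>) \<partial>restrict_space (\<mu> i) (orthant - {0})) = ennreal r"
    "(\<integral>\<^sup>+\<xi>. ennreal (- gg x \<xi>) \<partial>restrict_space (\<mu> i) (orthant - {0})) = ennreal q"
    "integral\<^sup>L (restrict_space (\<mu> i) (orthant - {0})) (gg x) = r - q" by metis
  then show ?thesis by (simp add: levy_alt ext_integral_def)
qed

lemma hk_meas: "(\<lambda>\<xi>::real^'n::finite. if norm \<xi> \<le> 1 then \<xi> $ k else 0) \<in> borel_measurable borel"
  by measurable

lemma hk_integrable:
  assumes M: "sets M = sets borel"
    and sm: "(\<integral>\<^sup>+ \<xi> \<in> {\<xi> \<in> orthant. 0 < norm \<xi> \<and> norm \<xi> \<le> 1}.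
                ennreal ((\<Sum>k\<in>UNIV - {i}. \<bar>\<xi> $ k\<bar>) + (\<xi> $ i)\<^sup>2) \<partial>M) < \<infinity>"
    and k: "k \<noteq> i"
  shows "integrable (restrict_space M (orthant - {0})) (\<lambda>\<xi>. if norm \<xi> \<le> 1 then \<xi> $ k else 0)"
proof (rule integrableI_bounded)
  show "(\<lambda>\<xi>. if norm \<xi> \<le> 1 then \<xi> $ k else 0) \<in> borel_measurable (restrict_space M (orthant - {0}))"
    by (rule measN[OF M hk_meas])
  have "(\<integral>\<^sup>+\<xi>. ennreal (norm (if norm \<xi> \<le> 1 then \<xi> $ k else 0)) \<partial>restrict_space M (orthant - {0}))
     \<le> (\<integral>\<^sup>+\<xi>. ennreal (1 * qq i \<xi> * indicator {\<xi>. norm \<xi> \<le> 1} \<xi>) \<partial>restrict_space M (orthant - {0}))"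
  proof (rule nn_integral_mono)
    fix \<xi> :: "real^'a"
    have "\<bar>\<xi> $ k\<bar> \<le> (\<Sum>j\<in>UNIV - {i}. \<bar>\<xi> $ j\<bar>)"
      using k by (intro member_le_sum) auto
    also have "\<dots> \<le> qq i \<xi>" by (simp add: qq_def)
    finally show "ennreal (norm (if norm \<xi> \<le> 1 then \<xi> $ k else 0)) \<le> ennreal (1 * qq i \<xi> * indicator {\<xi>. norm \<xi> \<le> 1} \<xi>)"
      by (intro ennreal_leI) (auto simp: indicator_def)
  qed
  also have "\<dots> < \<infinity>" by (rule small_fin[OF M sm]) simp
  finally show "(\<integral>\<^sup>+\<xi>. ennreal (norm (if norm \<xi> \<le> 1 then \<xi> $ k else 0)) \<partial>restrict_space M (orthant - {0})) < \<infinity>" .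
qed

lemma hk_LINT:
  assumes M: "sets M = sets borel"
  shows "integral\<^sup>L (restrict_space M (orthant - {0})) (\<lambda>\<xi>. if norm \<xi> \<le> 1 then \<xi> $ k else 0)
    = (LINT \<xi>:{\<xi> \<in> orthant. 0 < norm \<xi> \<and> norm \<xi> \<le> 1}|M. \<xi> $ k)"
  unfolding integral_restrict_space[OF S_sets[OF M]] set_lebesgue_integral_def
  by (intro Bochner_Integration.integral_cong) (auto simp: indicator_def)

lemma inner_diff_sum:
  assumes "x $ i = y $ i"
  shows "y \<bullet> \<xi> - x \<bullet> \<xi> = (\<Sum>k\<in>UNIV - {i}. (y $ k - x $ k) * \<xi> $ k)"
proof -
  have "y \<bullet> \<xi> - x \<bullet> \<xi> = (\<Sum>k\<in>UNIV. (y $ k - x $ k) * \<xi> $ k)"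
    by (simp add: inner_vec_def sum_subtractf[symmetric] left_diff_distrib)
  also have "\<dots> = (\<Sum>k\<in>UNIV - {i}. (y $ k - x $ k) * \<xi> $ k)"
    using assms by (simp add: sum.remove[of UNIV i])
  finally show ?thesis .
qed

lemma quasi:
  assumes M: "sets M = sets borel"
    and sm: "(\<integral>\<^sup>+ \<xi> \<in> {\<xi> \<in> orthant. 0 < norm \<xi> \<and> norm \<xi> \<le> 1}.
                ennreal ((\<Sum>k\<in>UNIV - {i}. \<bar>\<xi> $ k\<bar>) + (\<xi> $ i)\<^sup>2) \<partial>M) < \<infinity>"
    and ix: "integrable (restrict_space M (orthant - {0})) (gg x)"
    and iy: "integrable (restrict_space M (orthant - {0})) (gg y)"
    and le: "\<forall>k. x $ k \<le> y $ k" and eq: "x $ i = y $ i"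
    and dr: "\<And>k. k \<noteq> i \<Longrightarrow> b $ k - (LINT \<xi>:{\<xi> \<in> orthant. 0 < norm \<xi> \<and> norm \<xi> \<le> 1}|M. \<xi> $ k) \<ge> 0"
  shows "x \<bullet> b + integral\<^sup>L (restrict_space M (orthant - {0})) (gg x)
       \<le> y \<bullet> b + integral\<^sup>L (restrict_space M (orthant - {0})) (gg y)"
proof -
  let ?N = "restrict_space M (orthant - {0})"
  let ?h = "\<lambda>k \<xi>. if norm \<xi> \<le> 1 then \<xi> $ k else (0::real)"
  let ?I = "\<lambda>k. LINT \<xi>:{\<xi> \<in> orthant. 0 < norm \<xi> \<and> norm \<xi> \<le> 1}|M. \<xi> $ k"
  have hi: "integrable ?N (?h k)" if "k \<in> UNIV - {i}" for k
    using hk_integrable[OF M sm, of k] that by auto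
  have int1: "integrable ?N (\<lambda>\<xi>. - (\<Sum>k\<in>UNIV - {i}. (y $ k - x $ k) * ?h k \<xi>))"
    apply (rule integrable_minus, rule Bochner_Integration.integrable_sum, rule integrable_mult_right)
    using hi by auto
  have "integral\<^sup>L ?N (\<lambda>\<xi>. - (\<Sum>k\<in>UNIV - {i}. (y $ k - x $ k) * ?h k \<xi>))
      \<le> integral\<^sup>L ?N (\<lambda>\<xi>. gg y \<xi> - gg x \<xi>)"
  proof (rule integral_mono[OF int1 Bochner_Integration.integrable_diff[OF iy ix]])
    fix \<xi> assume "\<xi> \<in> space ?N"
    then have \<xi>: "\<xi> \<in> orthant" using spaceN[OF M] by auto
    have e: "exp (x \<bullet> \<xi>) \<le> exp (y \<bullet> \<xi>)" using inner_orthant_mono[OF \<xi>] le by simp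
    have s: "(\<Sum>k\<in>UNIV - {i}. (y $ k - x $ k) * ?h k \<xi>) = (if norm \<xi> \<le> 1 then y \<bullet> \<xi> - x \<bullet> \<xi> else 0)"
      using inner_diff_sum[OF eq, of \<xi>] by (auto intro: sum.neutral)
    show "- (\<Sum>k\<in>UNIV - {i}. (y $ k - x $ k) * ?h k \<xi>) \<le> gg y \<xi> - gg x \<xi>"
      unfolding s using e by (simp add: gg_def)
  qed
  also have "\<dots> = integral\<^sup>L ?N (gg y) - integral\<^sup>L ?N (gg x)"
    by (rule Bochner_Integration.integral_diff[OF iy ix])
  finally have A: "- (\<Sum>k\<in>UNIV - {i}. (y $ k - x $ k) * ?I k) \<le> integral\<^sup>L ?N (gg y) - integral\<^sup>L ?N (gg x)"
    using hi by (simp add: integral_sum integral_mult_right_zero hk_LINT[OF M])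
  have B: "y \<bullet> b - x \<bullet> b = (\<Sum>k\<in>UNIV - {i}. (y $ k - x $ k) * b $ k)"
    using inner_diff_sum[OF eq] by (simp add: inner_commute)
  have C: "0 \<le> (\<Sum>k\<in>UNIV - {i}. (y $ k - x $ k) * (b $ k - ?I k))"
    using le dr by (intro sum_nonneg mult_nonneg_nonneg) auto
  have "(\<Sum>k\<in>UNIV - {i}. (y $ k - x $ k) * (b $ k - ?I k)) = 
     (\<Sum>k\<in>UNIV - {i}. (y $ k - x $ k) * b $ k) - (\<Sum>k\<in>UNIV - {i}. (y $ k - x $ k) * ?I k)"
    by (simp add: right_diff_distrib sum_subtractf)
  with A B C show ?thesis by linarith
qed

lemma sq_convex:
  fixes a b t :: real assumes "0 \<le> t" "t \<le> 1"
  shows "(t * a + (1 - t) * b)\<^sup>2 \<le> t * a\<^sup>2 + (1 - t) * b\<^sup>2"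
proof -
  have "t * a\<^sup>2 + (1 - t) * b\<^sup>2 - (t * a + (1 - t) * b)\<^sup>2 = t * (1 - t) * (a - b)\<^sup>2"
    by (simp add: power2_eq_square algebra_simps)
  also have "\<dots> \<ge> 0" using assms by simp
  finally show ?thesis by simp
qed

lemma integral_convex:
  assumes ix: "integrable N (gg x)" and iy: "integrable N (gg y)" and iz: "integrable N (gg (t *\<^sub>R x + (1 - t) *\<^sub>R y))"
    and t: "0 \<le> t" "t \<le> 1"
  shows "integral\<^sup>L N (gg (t *\<^sub>R x + (1 - t) *\<^sub>R y)) \<le> t * integral\<^sup>L N (gg x) + (1 - t) * integral\<^sup>L N (gg y)"
proof -
  have "integral\<^sup>L N (gg (t *\<^sub>R x + (1 - t) *\<^sub>R y)) \<le> integral\<^sup>L N (\<lambda>\<xi>. t * gg x \<xi> + (1 - t) * gg y \<xi>)"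
    using ix iy by (intro integral_mono[OF iz] gg_convex[OF t]) auto
  also have "\<dots> = t * integral\<^sup>L N (gg x) + (1 - t) * integral\<^sup>L N (gg y)"
    using ix iy by simp
  finally show ?thesis .
qed

theorem mainTheorem6:
  fixes \<alpha> c :: "'n::finite \<Rightarrow> real"
    and \<beta> :: "'n \<Rightarrow> real^'n"
    and \<mu> :: "'n \<Rightarrow> (real^'n) measure"
  assumes alpha_nonneg: "\<And>i. \<alpha> i \<ge> 0"
    and c_nonneg: "\<And>i. c i \<ge> 0"
    and mu_borel: "\<And>i. sets (\<mu> i) = sets borel"
    and mu_support: "\<And>i. emeasure (\<mu> i) (UNIV - (orthant - {0})) = 0"
    and mu_large: "\<And>i. emeasure (\<mu> i) {\<xi> \<in> orthant. norm \<xi> > 1} < \<infinity>"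
    and mu_small: "\<And>i. (\<integral>\<^sup>+ \<xi> \<in> {\<xi> \<in> orthant. 0 < norm \<xi> \<and> norm \<xi> \<le> 1}.
                ennreal ((\<Sum>k\<in>UNIV - {i}. \<bar>\<xi> $ k\<bar>) + (\<xi> $ i)\<^sup>2) \<partial>\<mu> i) < \<infinity>"
    and drift: "\<And>i k. k \<noteq> i \<Longrightarrow>
                \<beta> i $ k - (LINT \<xi>:{\<xi> \<in> orthant. 0 < norm \<xi> \<and> norm \<xi> \<le> 1}|\<mu> i. \<xi> $ k) \<ge> 0"
  defines "U \<equiv> {x :: real^'n. \<forall>i. levy_f \<alpha> \<beta> c \<mu> i x < \<infinity>}"
  shows "convex U \<and>
    (\<forall>x\<in>U. \<forall>y. (\<forall>k. y $ k \<le> x $ k) \<longrightarrow> y \<in> U) \<and>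
    (\<forall>x\<in>U. \<forall>y\<in>U. \<forall>t::real. 0 \<le> t \<and> t \<le> 1 \<longrightarrow> (\<forall>i.
           levy_f \<alpha> \<beta> c \<mu> i (t *\<^sub>R x + (1 - t) *\<^sub>R y)
             \<le> ereal t * levy_f \<alpha> \<beta> c \<mu> i x + ereal (1 - t) * levy_f \<alpha> \<beta> c \<mu> i y)) \<and>
    (\<forall>x\<in>U. \<forall>y\<in>U. \<forall>i. (\<forall>k. x $ k \<le> y $ k) \<and> x $ i = y $ i \<longrightarrow>
           levy_f \<alpha> \<beta> c \<mu> i x \<le> levy_f \<alpha> \<beta> c \<mu> i y)"
proof -
  let ?N = "\<lambda>i. restrict_space (\<mu> i) (orthant - {0})"
  let ?P = "\<lambda>i x. (\<integral>\<^sup>+\<xi>. ennreal (gg x \<xi>) \<partial>?N i)"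
  have U: "x \<in> U \<longleftrightarrow> (\<forall>i. ?P i x < \<infinity>)" for x
    unfolding U_def using levy_lt_top_iff[OF mu_borel mu_large] by simp
  have I: "integrable (?N i) (gg x)" if "x \<in> U" for x i
    using that U integrable_iff[OF mu_borel mu_large] by blast
  have cU: "t *\<^sub>R x + (1 - t) *\<^sub>R y \<in> U" if "x \<in> U" "y \<in> U" "0 \<le> t" "t \<le> 1" for x y t
    using that U pos_convex[OF mu_borel] by blast
  have P1: "convex U"
  proof (rule convexI)
    fix x y and u v :: real assume "x \<in> U" "y \<in> U" "0 \<le> u" "0 \<le> v" "u + v = 1"
    then have "v = 1 - u" by simp
    then show "u *\<^sub>R x + v *\<^sub>R y \<in> U" using cU[of x y u] \<open>x \<in> U\<close> \<open>y \<in> U\<close> \<open>0 \<le> u\<close> \<open>0 \<le> v\<close> by simp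
  qed
  have P2: "\<forall>x\<in>U. \<forall>y. (\<forall>k. y $ k \<le> x $ k) \<longrightarrow> y \<in> U"
    using U pos_mono[OF mu_borel mu_small] by blast
  have P3: "levy_f \<alpha> \<beta> c \<mu> i (t *\<^sub>R x + (1 - t) *\<^sub>R y)
             \<le> ereal t * levy_f \<alpha> \<beta> c \<mu> i x + ereal (1 - t) * levy_f \<alpha> \<beta> c \<mu> i y"
    if x: "x \<in> U" and y: "y \<in> U" and t: "0 \<le> t" "t \<le> 1" for x y t i
  proof -
    let ?z = "t *\<^sub>R x + (1 - t) *\<^sub>R y"
    have z: "?z \<in> U" using cU[OF x y t] .
    have ic: "integral\<^sup>L (?N i) (gg ?z) \<le> t * integral\<^sup>L (?N i) (gg x) + (1 - t) * integral\<^sup>L (?N i) (gg y)"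
      by (rule integral_convex[OF I[OF x] I[OF y] I[OF z] t])
    have sq: "\<alpha> i / 2 * (?z $ i)\<^sup>2 \<le> t * (\<alpha> i / 2 * (x $ i)\<^sup>2) + (1 - t) * (\<alpha> i / 2 * (y $ i)\<^sup>2)"
    proof -
      have zi: "?z $ i = t * x $ i + (1 - t) * y $ i" by simp
      have "\<alpha> i / 2 * (?z $ i)\<^sup>2 \<le> \<alpha> i / 2 * (t * (x $ i)\<^sup>2 + (1 - t) * (y $ i)\<^sup>2)"
        unfolding zi using sq_convex[OF t, of "x $ i" "y $ i"] alpha_nonneg[of i] by (intro mult_left_mono) auto
      also have "\<dots> = t * (\<alpha> i / 2 * (x $ i)\<^sup>2) + (1 - t) * (\<alpha> i / 2 * (y $ i)\<^sup>2)"
        by (simp add: field_simps)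
      finally show ?thesis .
    qed
    have lin: "?z \<bullet> \<beta> i = t * (x \<bullet> \<beta> i) + (1 - t) * (y \<bullet> \<beta> i)"
      by (simp add: inner_add_left)
    define F where "F w = \<alpha> i / 2 * (w $ i)\<^sup>2 + w \<bullet> \<beta> i - c i + integral\<^sup>L (?N i) (gg w)" for w
    have cc: "c i = t * c i + (1 - t) * c i" by (simp add: algebra_simps)
    have "F ?z \<le> t * F x + (1 - t) * F y"
    proof -
      have "t * F x + (1 - t) * F y = (t * (\<alpha> i / 2 * (x $ i)\<^sup>2) + (1 - t) * (\<alpha> i / 2 * (y $ i)\<^sup>2))
        + (t * (x \<bullet> \<beta> i) + (1 - t) * (y \<bullet> \<beta> i)) - (t * c i + (1 - t) * c i)
        + (t * integral\<^sup>L (?N i) (gg x) + (1 - t) * integral\<^sup>L (?N i) (gg y))"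
        unfolding F_def by (simp add: algebra_simps)
      then show ?thesis unfolding F_def using ic sq lin cc by linarith
    qed
    then have "ereal (F ?z) \<le> ereal t * ereal (F x) + ereal (1 - t) * ereal (F y)" by simp
    then show ?thesis
      unfolding levy_val[OF I[OF x]] levy_val[OF I[OF y]] levy_val[OF I[OF z]] F_def .
  qed
  have P4: "levy_f \<alpha> \<beta> c \<mu> i x \<le> levy_f \<alpha> \<beta> c \<mu> i y"
    if x: "x \<in> U" and y: "y \<in> U" and le: "\<forall>k. x $ k \<le> y $ k" and eq: "x $ i = y $ i" for x y i
  proof -
    have "x \<bullet> \<beta> i + integral\<^sup>L (?N i) (gg x) \<le> y \<bullet> \<beta> i + integral\<^sup>L (?N i) (gg y)"
      by (rule quasi[OF mu_borel mu_small I[OF x] I[OF y] le eq drift])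
    then show ?thesis
      unfolding levy_val[OF I[OF x]] levy_val[OF I[OF y]] using eq by simp
  qed
  show ?thesis using P1 P2 P3 P4 by blast
qed

end
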